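(* Let $(\mathfrak{g},[\cdot,\cdot]_{\mathfrak{g}},\phi_{\mathfrak{g}})$ be a finite-dimensional weakly involutive Hom-Lie algebra and $(V,\beta,\rho)$ a weakly involutive representation ($V$ finite-dimensional) satisfying $\rho(\phi_{\mathfrak g}(x))\beta^2=\rho(\phi_{\mathfrak g}(x))$ for all $x\in\mathfrak g$. Let $T:V\to\mathfrak g$ be an $\mathcal O$-operator associated to $(V,\beta,\rho)$. Then there is a coboundary Hom-Lie bialgebra structure on $\mathfrak g\ltimes_{\rho^\circ}V^*$ induced by $r=\overline T-\sigma(\overline T)$, i.e. with cobracket $\Delta(u)=(\mathrm{ad}_u\otimes\phi_d+\phi_d\otimes\mathrm{ad}_u)r$, where $\phi_d=\phi_{\mathfrak g}\oplus\beta^*$.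
   Context: A Hom-Lie algebra $(\mathfrak{h},[\cdot,\cdot]_{\mathfrak{h}},\phi_{\mathfrak{h}})$: skew-symmetric bilinear bracket and linear map with $\phi_{\mathfrak h}[x,y]=[\phi_{\mathfrak h}x,\phi_{\mathfrak h}y]$ and $[\phi_{\mathfrak h}(x),[y,z]]+[\phi_{\mathfrak h}(y),[z,x]]+[\phi_{\mathfrak h}(z),[x,y]]=0$; weakly involutive if $[\phi_{\mathfrak h}^2(x),y]=[x,y]$ for all $x,y$. $\mathrm{ad}_zy=[z,y]$. A representation $(V,\beta,\rho)$ of $\mathfrak g$: $\beta\in\mathfrak{gl}(V)$, $\rho:\mathfrak g\to\mathfrak{gl}(V)$ with $\rho(\phi_{\mathfrak g}(x))\beta=\beta\rho(x)$ and $\rho([x,y]_{\mathfrak g})\beta=\rho(\phi_{\mathfrak g}(x))\rho(y)-\rho(\phi_{\mathfrak g}(y))\rho(x)$; weakly involutive if $\rho(\phi_{\mathfrak g}^2(x))=\rho(x)$. $\rho^\circ:\mathfrak g\to\mathfrak{gl}(V^* )$, $\langle\rho^\circ(x)\xi,v\rangle=-\langle\xi,\rho(\phi_{\mathfrak g}(x))v\rangle$. $\mathfrak g\ltimes_{\rho^\circ}V^*$ is $\mathfrak g\oplus V^*$ with bracket $[(x,\xi),(y,\eta)]=([x,y]_{\mathfrak g},\rho^\circ(x)\eta-\rho^\circ(y)\xi)$ and twisting map $\phi_{\mathfrak g}\oplus\beta^*$. An $\mathcal O$-operator associated to $(V,\beta,\rho)$ is a linear $T:V\to\mathfrak g$ with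 $T\beta=\phi_{\mathfrak g}T$ and $[T(u),T(v)]_{\mathfrak g}=T(\rho(T(u))v-\rho(T(v))u)$. With a basis $\{v_i\}$ of $V$ and dual basis $\{v^i\}$, $\overline T=\sum_iv^i\otimes T(v_i)$; $\sigma$ is the flip. A Hom-Lie bialgebra $(\mathfrak h,\Delta)$ (finite-dimensional): a weakly involutive Hom-Lie algebra $\mathfrak h$ with $\Delta:\mathfrak h\to\mathfrak h\otimes\mathfrak h$ such that $\mathfrak h^*$ with bracket $\langle[a,b],x\rangle=\langle\Delta(x),a\otimes b\rangle$ and map $\phi_{\mathfrak h}^*$ is a weakly involutive Hom-Lie algebra and $\Delta[x,y]=\mathrm{ad}_{\phi_{\mathfrak h}(x)}\Delta(y)-\mathrm{ad}_{\phi_{\mathfrak h}(y)}\Delta(x)$, where $\mathrm{ad}_zt=(\mathrm{ad}_z\otimes\phi_{\mathfrak h}+\phi_{\mathfrak h}\otimes\mathrm{ad}_z)t$ for $t\in\mathfrak h\otimes\mathfrak h$. It is coboundary if $\Delta(x)=\mathrm{ad}_xr$ for some $r$ with $(\phi_{\mathfrak h}\otimes\mathrm{Id})r=(\mathrm{Id}\otimes\phi_{\mathfrak h})r$. *)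

theory Defs
  imports Main "HOL-Library.Function_Algebras"
begin

text \<open>Finite-dimensional vector spaces over a field 'k are represented in coordinates
  w.r.t. a fixed basis indexed by a finite type 'i: a vector is a function 'i \<Rightarrow> 'k,
  a dual vector is given by its coordinates in the dual basis (also 'i \<Rightarrow> 'k), and an
  element of the tensor square is its coefficient array 'i \<Rightarrow> 'i \<Rightarrow> 'k.\<close>

definition bvec :: "'i \<Rightarrow> 'i \<Rightarrow> 'k::zero_neq_one" where
  "bvec i = (\<lambda>j. if j = i then 1 else 0)"

definition lin :: "(('i \<Rightarrow> 'k::comm_ring_1) \<Rightarrow> ('j \<Rightarrow> 'k)) \<Rightarrow> bool" where
  "lin f \<longleftrightarrow> (\<forall>x y. f (x + y) = f x + f y) \<and> (\<forall>c x. f (\<lambda>i. c * x i) = (\<lambda>j. c * f x j))"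

definition bilin :: "(('i \<Rightarrow> 'k::comm_ring_1) \<Rightarrow> ('j \<Rightarrow> 'k) \<Rightarrow> ('l \<Rightarrow> 'k)) \<Rightarrow> bool" where
  "bilin b \<longleftrightarrow> (\<forall>x. lin (b x)) \<and> (\<forall>y. lin (\<lambda>x. b x y))"

definition hom_lie :: "(('i \<Rightarrow> 'k::comm_ring_1) \<Rightarrow> ('i \<Rightarrow> 'k) \<Rightarrow> ('i \<Rightarrow> 'k)) \<Rightarrow> (('i \<Rightarrow> 'k) \<Rightarrow> ('i \<Rightarrow> 'k)) \<Rightarrow> bool" where
  "hom_lie br phi \<longleftrightarrow> bilin br \<and> lin phi \<and>
     (\<forall>x y. br x y = - br y x) \<and>
     (\<forall>x y. phi (br x y) = br (phi x) (phi y)) \<and>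
     (\<forall>x y z. br (phi x) (br y z) + br (phi y) (br z x) + br (phi z) (br x y) = 0)"

definition weakly_inv :: "(('i \<Rightarrow> 'k) \<Rightarrow> ('i \<Rightarrow> 'k) \<Rightarrow> ('i \<Rightarrow> 'k)) \<Rightarrow> (('i \<Rightarrow> 'k) \<Rightarrow> ('i \<Rightarrow> 'k)) \<Rightarrow> bool" where
  "weakly_inv br phi \<longleftrightarrow> (\<forall>x y. br (phi (phi x)) y = br x y)"

definition hom_lie_rep ::
  "(('n \<Rightarrow> 'k::comm_ring_1) \<Rightarrow> ('n \<Rightarrow> 'k) \<Rightarrow> ('n \<Rightarrow> 'k)) \<Rightarrow> (('n \<Rightarrow> 'k) \<Rightarrow> ('n \<Rightarrow> 'k))
   \<Rightarrow> (('m \<Rightarrow> 'k) \<Rightarrow> ('m \<Rightarrow> 'k)) \<Rightarrow> (('n \<Rightarrow> 'k) \<Rightarrow> ('m \<Rightarrow> 'k) \<Rightarrow> ('m \<Rightarrow> 'k)) \<Rightarrow> bool" where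
  "hom_lie_rep br phi beta rho \<longleftrightarrow> lin beta \<and> bilin rho \<and>
     (\<forall>x v. rho (phi x) (beta v) = beta (rho x v)) \<and>
     (\<forall>x y v. rho (br x y) (beta v) = rho (phi x) (rho y v) - rho (phi y) (rho x v))"

definition weakly_inv_rep :: "(('n \<Rightarrow> 'k) \<Rightarrow> ('n \<Rightarrow> 'k)) \<Rightarrow> (('n \<Rightarrow> 'k) \<Rightarrow> ('m \<Rightarrow> 'k) \<Rightarrow> ('m \<Rightarrow> 'k)) \<Rightarrow> bool" where
  "weakly_inv_rep phi rho \<longleftrightarrow> (\<forall>x. rho (phi (phi x)) = rho x)"

definition O_operator ::
  "(('n \<Rightarrow> 'k::comm_ring_1) \<Rightarrow> ('n \<Rightarrow> 'k) \<Rightarrow> ('n \<Rightarrow> 'k)) \<Rightarrow> (('n \<Rightarrow> 'k) \<Rightarrow> ('n \<Rightarrow> 'k))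
   \<Rightarrow> (('m \<Rightarrow> 'k) \<Rightarrow> ('m \<Rightarrow> 'k)) \<Rightarrow> (('n \<Rightarrow> 'k) \<Rightarrow> ('m \<Rightarrow> 'k) \<Rightarrow> ('m \<Rightarrow> 'k))
   \<Rightarrow> (('m \<Rightarrow> 'k) \<Rightarrow> ('n \<Rightarrow> 'k)) \<Rightarrow> bool" where
  "O_operator br phi beta rho T \<longleftrightarrow> lin T \<and>
     (\<forall>v. T (beta v) = phi (T v)) \<and>
     (\<forall>u v. br (T u) (T v) = T (rho (T u) v - rho (T v) u))"

text \<open>Dual map f^* in dual-basis coordinates: <f^* a, x> = <a, f x>.\<close>
definition dual_map :: "(('i \<Rightarrow> 'k::comm_ring_1) \<Rightarrow> ('j \<Rightarrow> 'k)) \<Rightarrow> ('j \<Rightarrow> 'k) \<Rightarrow> ('i \<Rightarrow> 'k)" where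
  "dual_map f a = (\<lambda>i. \<Sum>j\<in>UNIV. a j * f (bvec i) j)"

definition rho_circ :: "(('n \<Rightarrow> 'k::comm_ring_1) \<Rightarrow> ('n \<Rightarrow> 'k)) \<Rightarrow> (('n \<Rightarrow> 'k) \<Rightarrow> ('m \<Rightarrow> 'k) \<Rightarrow> ('m \<Rightarrow> 'k))
   \<Rightarrow> ('n \<Rightarrow> 'k) \<Rightarrow> ('m \<Rightarrow> 'k) \<Rightarrow> ('m \<Rightarrow> 'k)" where
  "rho_circ phi rho x xi = - dual_map (rho (phi x)) xi"

text \<open>Semidirect product g \<ltimes>_{rho-circ} V^*, with basis indexed by 'n + 'm
  (Inl: basis of g, Inr: dual basis of V^*).\<close>
definition sd_br ::
  "(('n \<Rightarrow> 'k::comm_ring_1) \<Rightarrow> ('n \<Rightarrow> 'k) \<Rightarrow> ('n \<Rightarrow> 'k)) \<Rightarrow> (('n \<Rightarrow> 'k) \<Rightarrow> ('n \<Rightarrow> 'k))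
   \<Rightarrow> (('n \<Rightarrow> 'k) \<Rightarrow> ('m \<Rightarrow> 'k) \<Rightarrow> ('m \<Rightarrow> 'k))
   \<Rightarrow> ('n + 'm \<Rightarrow> 'k) \<Rightarrow> ('n + 'm \<Rightarrow> 'k) \<Rightarrow> ('n + 'm \<Rightarrow> 'k)" where
  "sd_br br phi rho w w' =
     case_sum (br (w \<circ> Inl) (w' \<circ> Inl))
              (rho_circ phi rho (w \<circ> Inl) (w' \<circ> Inr) - rho_circ phi rho (w' \<circ> Inl) (w \<circ> Inr))"

definition sd_phi :: "(('n \<Rightarrow> 'k::comm_ring_1) \<Rightarrow> ('n \<Rightarrow> 'k)) \<Rightarrow> (('m \<Rightarrow> 'k) \<Rightarrow> ('m \<Rightarrow> 'k))
   \<Rightarrow> ('n + 'm \<Rightarrow> 'k) \<Rightarrow> ('n + 'm \<Rightarrow> 'k)" where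
  "sd_phi phi beta w = case_sum (phi (w \<circ> Inl)) (dual_map beta (w \<circ> Inr))"

text \<open>Tensor square: (A \<otimes> B) t, ad_z t = (ad_z \<otimes> phi + phi \<otimes> ad_z) t, flip sigma.\<close>
definition tmap :: "(('i \<Rightarrow> 'k::comm_ring_1) \<Rightarrow> ('i \<Rightarrow> 'k)) \<Rightarrow> (('i \<Rightarrow> 'k) \<Rightarrow> ('i \<Rightarrow> 'k))
   \<Rightarrow> ('i \<Rightarrow> 'i \<Rightarrow> 'k) \<Rightarrow> ('i \<Rightarrow> 'i \<Rightarrow> 'k)" where
  "tmap A B t = (\<lambda>u v. \<Sum>p\<in>UNIV. \<Sum>q\<in>UNIV. t p q * A (bvec p) u * B (bvec q) v)"

definition tad :: "(('i \<Rightarrow> 'k::comm_ring_1) \<Rightarrow> ('i \<Rightarrow> 'k) \<Rightarrow> ('i \<Rightarrow> 'k)) \<Rightarrow> (('i \<Rightarrow> 'k) \<Rightarrow> ('i \<Rightarrow> 'k))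
   \<Rightarrow> ('i \<Rightarrow> 'k) \<Rightarrow> ('i \<Rightarrow> 'i \<Rightarrow> 'k) \<Rightarrow> ('i \<Rightarrow> 'i \<Rightarrow> 'k)" where
  "tad br phi z t = tmap (br z) phi t + tmap phi (br z) t"

definition flip :: "('i \<Rightarrow> 'i \<Rightarrow> 'k) \<Rightarrow> ('i \<Rightarrow> 'i \<Rightarrow> 'k)" where
  "flip t = (\<lambda>p q. t q p)"

text \<open>Bracket on the dual induced by Delta: <[a,b], x> = <Delta x, a \<otimes> b>.\<close>
definition dual_br :: "(('i \<Rightarrow> 'k::comm_ring_1) \<Rightarrow> ('i \<Rightarrow> 'i \<Rightarrow> 'k))
   \<Rightarrow> ('i \<Rightarrow> 'k) \<Rightarrow> ('i \<Rightarrow> 'k) \<Rightarrow> ('i \<Rightarrow> 'k)" where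
  "dual_br Delta a b = (\<lambda>i. \<Sum>p\<in>UNIV. \<Sum>q\<in>UNIV. Delta (bvec i) p q * a p * b q)"

definition hom_lie_bialg :: "(('i \<Rightarrow> 'k::comm_ring_1) \<Rightarrow> ('i \<Rightarrow> 'k) \<Rightarrow> ('i \<Rightarrow> 'k))
   \<Rightarrow> (('i \<Rightarrow> 'k) \<Rightarrow> ('i \<Rightarrow> 'k)) \<Rightarrow> (('i \<Rightarrow> 'k) \<Rightarrow> ('i \<Rightarrow> 'i \<Rightarrow> 'k)) \<Rightarrow> bool" where
  "hom_lie_bialg br phi Delta \<longleftrightarrow>
     hom_lie br phi \<and> weakly_inv br phi \<and>
     (\<forall>x y. Delta (x + y) = Delta x + Delta y) \<and>
     (\<forall>c x. Delta (\<lambda>i. c * x i) = (\<lambda>u v. c * Delta x u v)) \<and>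
     hom_lie (dual_br Delta) (dual_map phi) \<and> weakly_inv (dual_br Delta) (dual_map phi) \<and>
     (\<forall>x y. Delta (br x y) = tad br phi (phi x) (Delta y) - tad br phi (phi y) (Delta x))"

definition coboundary_by :: "(('i \<Rightarrow> 'k::comm_ring_1) \<Rightarrow> ('i \<Rightarrow> 'k) \<Rightarrow> ('i \<Rightarrow> 'k))
   \<Rightarrow> (('i \<Rightarrow> 'k) \<Rightarrow> ('i \<Rightarrow> 'k)) \<Rightarrow> ('i \<Rightarrow> 'i \<Rightarrow> 'k) \<Rightarrow> bool" where
  "coboundary_by br phi r \<longleftrightarrow>
     hom_lie_bialg br phi (\<lambda>x. tad br phi x r) \<and> tmap phi id r = tmap id phi r"

text \<open>T-bar = sum_i v^i \<otimes> T(v_i) in d \<otimes> d (first factor in V^*, second in g).\<close>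
definition Tbar :: "(('m \<Rightarrow> 'k::zero_neq_one) \<Rightarrow> ('n \<Rightarrow> 'k)) \<Rightarrow> ('n + 'm) \<Rightarrow> ('n + 'm) \<Rightarrow> 'k" where
  "Tbar T = (\<lambda>p q. case (p, q) of (Inr i, Inl j) \<Rightarrow> T (bvec i) j | _ \<Rightarrow> 0)"

end

theory Submission
  imports Defs
begin


definition ip :: "('i::finite \<Rightarrow> 'k::comm_ring_1) \<Rightarrow> ('i \<Rightarrow> 'k) \<Rightarrow> 'k" where
  "ip a v = (\<Sum>j\<in>UNIV. a j * v j)"

definition tp :: "('i::finite \<Rightarrow> 'i \<Rightarrow> 'k::comm_ring_1) \<Rightarrow> ('i \<Rightarrow> 'k) \<Rightarrow> ('i \<Rightarrow> 'k) \<Rightarrow> 'k" where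
  "tp t a b = (\<Sum>p\<in>UNIV. \<Sum>q\<in>UNIV. t p q * a p * b q)"

lemma sum_fun_apply: "(sum g S) x = sum (\<lambda>i. g i x) S"
  by (induction S rule: infinite_finite_induct) auto

lemma lin_add: "lin f \<Longrightarrow> f (x + y) = f x + f y" by (simp add: lin_def)
lemma lin_smul: "lin f \<Longrightarrow> f (\<lambda>i. c * x i) = (\<lambda>j. c * f x j)" by (simp add: lin_def)
lemma lin_zero: "lin f \<Longrightarrow> f 0 = 0"
proof -
  assume "lin f"
  then have "f (0 + 0) = f 0 + f 0" by (rule lin_add)
  then show ?thesis by simp
qed
lemma lin_uminus: "lin f \<Longrightarrow> f (- x) = - f x"
proof -
  assume l: "lin f"
  then have "f (x + - x) = f x + f (- x)" by (rule lin_add)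
  then have "f x + f (- x) = 0" using lin_zero[OF l] by simp
  then show ?thesis by (simp add: eq_neg_iff_add_eq_0 add.commute)
qed
lemma lin_diff: "lin f \<Longrightarrow> f (x - y) = f x - f y"
  using lin_add[of f x "- y"] lin_uminus[of f y] by simp

lemma lin_sum: "lin f \<Longrightarrow> f (sum g S) = sum (\<lambda>i. f (g i)) S"
  by (induction S rule: infinite_finite_induct) (auto simp: lin_zero lin_add)

lemma sum_bvec_l: "(\<Sum>j\<in>UNIV. (if j = i then 1 else 0) * ((v::'i::finite \<Rightarrow> 'k::comm_ring_1) j)) = v i"
proof -
  have "(\<Sum>j\<in>UNIV. (if j = i then 1 else 0) * v j) = (\<Sum>j\<in>UNIV. if j = i then v i else 0)" by (rule sum.cong) auto
  then show ?thesis by simp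
qed
lemma sum_bvec_r: "(\<Sum>j\<in>UNIV. ((v::'i::finite \<Rightarrow> 'k::comm_ring_1) j) * (if j = i then 1 else 0)) = v i"
proof -
  have "(\<Sum>j\<in>UNIV. v j * (if j = i then 1 else 0)) = (\<Sum>j\<in>UNIV. if j = i then v i else 0)" by (rule sum.cong) auto
  then show ?thesis by simp
qed
lemma sum_bvec_l': "(\<Sum>j\<in>UNIV. (if i = j then 1 else 0) * ((v::'i::finite \<Rightarrow> 'k::comm_ring_1) j)) = v i"
proof -
  have "(\<Sum>j\<in>UNIV. (if i = j then 1 else 0) * v j) = (\<Sum>j\<in>UNIV. if j = i then v i else 0)" by (rule sum.cong) auto
  then show ?thesis by simp
qed
lemma sum_bvec_r': "(\<Sum>j\<in>UNIV. ((v::'i::finite \<Rightarrow> 'k::comm_ring_1) j) * (if i = j then 1 else 0)) = v i"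
proof -
  have "(\<Sum>j\<in>UNIV. v j * (if i = j then 1 else 0)) = (\<Sum>j\<in>UNIV. if j = i then v i else 0)" by (rule sum.cong) auto
  then show ?thesis by simp
qed
lemmas sum_bvec = sum_bvec_l sum_bvec_r sum_bvec_l' sum_bvec_r'

lemma vec_expand: "(x::'i::finite \<Rightarrow> 'k::comm_ring_1) = (\<Sum>i\<in>UNIV. (\<lambda>j. x i * bvec i j))"
  by (rule ext) (simp only: sum_fun_apply bvec_def sum_bvec_r')

lemma lin_expand:
  fixes f :: "('i::finite \<Rightarrow> 'k::comm_ring_1) \<Rightarrow> ('j \<Rightarrow> 'k)"
  assumes "lin f" shows "f x j = (\<Sum>i\<in>UNIV. x i * f (bvec i) j)"
proof -
  have "f x = f (\<Sum>i\<in>UNIV. (\<lambda>j. x i * bvec i j))" by (subst vec_expand) rule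
  also have "\<dots> = (\<Sum>i\<in>UNIV. f (\<lambda>j. x i * bvec i j))" by (rule lin_sum[OF assms])
  also have "\<dots> = (\<Sum>i\<in>UNIV. (\<lambda>j. x i * f (bvec i) j))"
    by (rule sum.cong[OF refl], rule lin_smul[OF assms])
  finally show ?thesis by (simp add: sum_fun_apply)
qed

lemma dual_ip: "dual_map f a i = ip a (f (bvec i))"
  by (simp add: dual_map_def ip_def)

lemma ip_dual:
  assumes "lin f" shows "ip (dual_map f a) x = ip a (f x)"
proof -
  have "ip a (f x) = (\<Sum>j\<in>UNIV. a j * (\<Sum>i\<in>UNIV. x i * f (bvec i) j))"
    by (simp only: ip_def lin_expand[OF assms, of x])
  also have "\<dots> = (\<Sum>j\<in>UNIV. \<Sum>i\<in>UNIV. a j * x i * f (bvec i) j)"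
    by (simp only: sum_distrib_left mult.assoc)
  also have "\<dots> = (\<Sum>i\<in>UNIV. \<Sum>j\<in>UNIV. a j * x i * f (bvec i) j)"
    by (rule sum.swap)
  also have "\<dots> = (\<Sum>i\<in>UNIV. (\<Sum>j\<in>UNIV. a j * f (bvec i) j) * x i)"
    by (simp only: sum_distrib_right) (intro sum.cong refl, simp only: ac_simps)
  also have "\<dots> = ip (dual_map f a) x"
    by (simp only: ip_def dual_map_def)
  finally show ?thesis by simp
qed

lemma ip_comm: "ip a b = ip b a" by (simp add: ip_def mult.commute)
lemma ip_bvec1[simp]: "ip (bvec i) v = v i" by (simp add: ip_def bvec_def sum_bvec)
lemma ip_bvec2[simp]: "ip v (bvec i) = v i" by (simp add: ip_def bvec_def sum_bvec)
lemma ip_add2: "ip a (x + y) = ip a x + ip a y" by (simp add: ip_def sum.distrib algebra_simps)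
lemma ip_diff2: "ip a (x - y) = ip a x - ip a y" by (simp add: ip_def sum_subtractf algebra_simps)
lemma ip_uminus2: "ip a (- x) = - ip a x" by (simp add: ip_def sum_negf)
lemma ip_zero2[simp]: "ip a 0 = 0" by (simp add: ip_def)
lemma ip_add1: "ip (x + y) a = ip x a + ip y a" by (simp add: ip_def sum.distrib algebra_simps)
lemma ip_diff1: "ip (x - y) a = ip x a - ip y a" by (simp add: ip_def sum_subtractf algebra_simps)
lemma ip_uminus1: "ip (- x) a = - ip x a" by (simp add: ip_def sum_negf)
lemma ip_zero1[simp]: "ip 0 a = 0" by (simp add: ip_def)
lemmas ip_lin = ip_add2 ip_diff2 ip_uminus2 ip_add1 ip_diff1 ip_uminus1

lemma dual_comp:
  fixes f :: "('i::finite \<Rightarrow> 'k::comm_ring_1) \<Rightarrow> ('j::finite \<Rightarrow> 'k)"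
    and g :: "('j \<Rightarrow> 'k) \<Rightarrow> ('l::finite \<Rightarrow> 'k)"
  assumes "lin g" shows "dual_map f (dual_map g a) = dual_map (\<lambda>x. g (f x)) a"
proof
  fix i
  show "dual_map f (dual_map g a) i = dual_map (\<lambda>x. g (f x)) a i"
  proof -
    have "dual_map f (dual_map g a) i = ip (dual_map g a) (f (bvec i))" by (rule dual_ip)
    also have "\<dots> = ip a (g (f (bvec i)))" by (rule ip_dual[OF assms])
    finally show ?thesis by (simp add: dual_ip)
  qed
qed

lemma dual_dual:
  fixes f :: "('i::finite \<Rightarrow> 'k::comm_ring_1) \<Rightarrow> ('j::finite \<Rightarrow> 'k)"
  assumes "lin f" shows "dual_map (dual_map f) u = f u"
proof
  fix i
  have "dual_map (dual_map f) u i = (\<Sum>j\<in>UNIV. u j * f (bvec j) i)"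
    by (simp add: dual_map_def bvec_def sum_bvec)
  then show "dual_map (dual_map f) u i = f u i" by (simp only: lin_expand[OF assms, of u])
qed

lemma dual_id: "dual_map (\<lambda>x. x) (a::'i::finite \<Rightarrow> 'k::comm_ring_1) = a"
  by (rule ext) (simp add: dual_ip)
lemma dual_id': "dual_map id (a::'i::finite \<Rightarrow> 'k::comm_ring_1) = a"
  by (rule ext) (simp add: dual_ip)
lemma dual_add: "dual_map f (a + b) = dual_map f a + dual_map f (b::'i::finite \<Rightarrow> 'k::comm_ring_1)"
  by (rule ext) (simp add: dual_ip ip_lin)
lemma dual_diff: "dual_map f (a - b) = dual_map f a - dual_map f (b::'i::finite \<Rightarrow> 'k::comm_ring_1)"
  by (rule ext) (simp add: dual_ip ip_lin)
lemma dual_uminus: "dual_map f (- b) = - dual_map f (b::'i::finite \<Rightarrow> 'k::comm_ring_1)"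
  by (rule ext) (simp add: dual_ip ip_lin)
lemma dual_zero[simp]: "dual_map f (0::'i::finite \<Rightarrow> 'k::comm_ring_1) = 0"
  by (rule ext) (simp add: dual_ip)
lemma dual_fdiff: "dual_map (\<lambda>x. f x - g x) (a::'i::finite \<Rightarrow> 'k::comm_ring_1) = dual_map f a - dual_map g a"
  by (rule ext) (simp add: dual_ip ip_lin)
lemma dual_fadd: "dual_map (\<lambda>x. f x + g x) (a::'i::finite \<Rightarrow> 'k::comm_ring_1) = dual_map f a + dual_map g a"
  by (rule ext) (simp add: dual_ip ip_lin)
lemma dual_fuminus: "dual_map (\<lambda>x. - f x) (a::'i::finite \<Rightarrow> 'k::comm_ring_1) = - dual_map f a"
  by (rule ext) (simp add: dual_ip ip_lin)
lemma lin_dual: "lin (dual_map f)"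
  by (simp add: lin_def dual_map_def fun_eq_iff sum.distrib sum_distrib_left algebra_simps)

lemma swap4:
  "(\<Sum>u\<in>A. \<Sum>v\<in>B. \<Sum>p\<in>C. \<Sum>q\<in>D. F u v p q) =
   (\<Sum>p\<in>C. \<Sum>q\<in>D. \<Sum>u\<in>A. \<Sum>v\<in>B. F u v p q)"
proof -
  have "(\<Sum>u\<in>A. \<Sum>v\<in>B. \<Sum>p\<in>C. \<Sum>q\<in>D. F u v p q) =
        (\<Sum>u\<in>A. \<Sum>p\<in>C. \<Sum>v\<in>B. \<Sum>q\<in>D. F u v p q)"
    by (rule sum.cong[OF refl], rule sum.swap)
  also have "\<dots> = (\<Sum>u\<in>A. \<Sum>p\<in>C. \<Sum>q\<in>D. \<Sum>v\<in>B. F u v p q)"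
    by (rule sum.cong[OF refl], rule sum.cong[OF refl], rule sum.swap)
  also have "\<dots> = (\<Sum>p\<in>C. \<Sum>u\<in>A. \<Sum>q\<in>D. \<Sum>v\<in>B. F u v p q)"
    by (rule sum.swap)
  also have "\<dots> = (\<Sum>p\<in>C. \<Sum>q\<in>D. \<Sum>u\<in>A. \<Sum>v\<in>B. F u v p q)"
    by (rule sum.cong[OF refl], rule sum.swap)
  finally show ?thesis .
qed

lemma tp_tmap: "tp (tmap A B t) a b = tp t (dual_map A a) (dual_map B b)"
proof -
  have "tp (tmap A B t) a b = (\<Sum>u\<in>UNIV. \<Sum>v\<in>UNIV. \<Sum>p\<in>UNIV. \<Sum>q\<in>UNIV.
           t p q * A (bvec p) u * B (bvec q) v * a u * b v)"
    by (simp add: tp_def tmap_def sum_distrib_right)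
  also have "\<dots> = (\<Sum>p\<in>UNIV. \<Sum>q\<in>UNIV. \<Sum>u\<in>UNIV. \<Sum>v\<in>UNIV.
           t p q * A (bvec p) u * B (bvec q) v * a u * b v)"
    by (rule swap4)
  also have "\<dots> = tp t (dual_map A a) (dual_map B b)"
    unfolding tp_def dual_map_def
  proof (intro sum.cong refl)
    fix p q
    have "t p q * (\<Sum>j\<in>UNIV. a j * A (bvec p) j) * (\<Sum>j\<in>UNIV. b j * B (bvec q) j)
       = (\<Sum>u\<in>UNIV. \<Sum>v\<in>UNIV. t p q * ((a u * A (bvec p) u) * (b v * B (bvec q) v)))"
    proof -
      have e: "(\<Sum>j\<in>UNIV. a j * A (bvec p) j) * (\<Sum>j\<in>UNIV. b j * B (bvec q) j) =
         (\<Sum>u\<in>UNIV. \<Sum>v\<in>UNIV. (a u * A (bvec p) u) * (b v * B (bvec q) v))"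
        by (rule sum_product)
      have "t p q * (\<Sum>j\<in>UNIV. a j * A (bvec p) j) * (\<Sum>j\<in>UNIV. b j * B (bvec q) j)
        = t p q * ((\<Sum>j\<in>UNIV. a j * A (bvec p) j) * (\<Sum>j\<in>UNIV. b j * B (bvec q) j))"
        by (simp only: mult.assoc)
      also have "\<dots> = t p q * (\<Sum>u\<in>UNIV. \<Sum>v\<in>UNIV. (a u * A (bvec p) u) * (b v * B (bvec q) v))"
        by (simp only: e)
      also have "\<dots> = (\<Sum>u\<in>UNIV. \<Sum>v\<in>UNIV. t p q * ((a u * A (bvec p) u) * (b v * B (bvec q) v)))"
        by (simp only: sum_distrib_left)
      finally show ?thesis .
    qed
    also have "\<dots> = (\<Sum>u\<in>UNIV. \<Sum>v\<in>UNIV. t p q * A (bvec p) u * B (bvec q) v * a u * b v)"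
      by (intro sum.cong refl) (simp only: ac_simps)
    finally show "(\<Sum>u\<in>UNIV. \<Sum>v\<in>UNIV. t p q * A (bvec p) u * B (bvec q) v * a u * b v) =
      t p q * (\<Sum>j\<in>UNIV. a j * A (bvec p) j) * (\<Sum>j\<in>UNIV. b j * B (bvec q) j)" by simp
  qed
  finally show ?thesis .
qed




lemma tp_bvec[simp]: "tp t (bvec u) (bvec v) = t u v"
proof -
  have "tp t (bvec u) (bvec v) = (\<Sum>p\<in>UNIV. ip (\<lambda>q. t p q * bvec u p) (bvec v))"
    by (simp only: tp_def ip_def)
  also have "\<dots> = (\<Sum>p\<in>UNIV. t p v * bvec u p)" by (simp only: ip_bvec2)
  also have "\<dots> = ip (\<lambda>p. t p v) (bvec u)" by (simp only: ip_def)
  finally show ?thesis by (simp only: ip_bvec2)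
qed

lemma tensor_eq: "(\<And>a b. tp s a b = tp t a b) \<Longrightarrow> s = t"
  by (intro ext) (metis tp_bvec)

lemma tp_add_t: "tp (s + t) a b = tp s a b + tp t a b"
  by (simp add: tp_def sum.distrib algebra_simps)
lemma tp_diff_t: "tp (s - t) a b = tp s a b - tp t a b"
  by (simp add: tp_def sum_subtractf algebra_simps)
lemma tp_flip: "tp (flip t) a b = tp t b a"
  unfolding tp_def flip_def by (subst sum.swap) (simp add: ac_simps)
lemma tp_add1: "tp t (a + a') b = tp t a b + tp t a' b"
  by (simp add: tp_def sum.distrib algebra_simps)
lemma tp_diff1: "tp t (a - a') b = tp t a b - tp t a' b"
  by (simp add: tp_def sum_subtractf algebra_simps)
lemma tp_add2: "tp t a (b + b') = tp t a b + tp t a b'"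
  by (simp add: tp_def sum.distrib algebra_simps)
lemma tp_diff2: "tp t a (b - b') = tp t a b - tp t a b'"
  by (simp add: tp_def sum_subtractf algebra_simps)

lemma lin_id: "lin (\<lambda>x. x)" by (simp add: lin_def)
lemma lin_comp: "lin f \<Longrightarrow> lin g \<Longrightarrow> lin (\<lambda>x. f (g x))"
  by (simp add: lin_def)
lemma lin_fadd: "lin f \<Longrightarrow> lin g \<Longrightarrow> lin (\<lambda>x. f x + g x)"
  by (simp add: lin_def fun_eq_iff algebra_simps)
lemma lin_fdiff: "lin f \<Longrightarrow> lin g \<Longrightarrow> lin (\<lambda>x. f x - g x)"
  by (simp add: lin_def fun_eq_iff algebra_simps)

lemma tp_tad: "tp (tad br phi z t) a b =
   tp t (dual_map (br z) a) (dual_map phi b) + tp t (dual_map phi a) (dual_map (br z) b)"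
  by (simp add: tad_def tp_add_t tp_tmap)

lemma hl_facts:
  assumes "hom_lie br phi"
  shows "lin (br x)" "lin (\<lambda>x. br x y)" "lin phi" "br x y = - br y x"
    "phi (br x y) = br (phi x) (phi y)"
    "br (phi x) (br y z) + br (phi y) (br z x) + br (phi z) (br x y) = 0"
  using assms unfolding hom_lie_def bilin_def by blast+

lemma cocycle_generic:
  fixes br :: "('i::finite \<Rightarrow> 'k::comm_ring_1) \<Rightarrow> ('i \<Rightarrow> 'k) \<Rightarrow> ('i \<Rightarrow> 'k)"
  assumes hl: "hom_lie br phi" and wi: "weakly_inv br phi"
    and G: "\<And>a b. tp r (dual_map phi a) b = tp r a (dual_map phi b)"
  shows "tad br phi (br x y) r = tad br phi (phi x) (tad br phi y r) - tad br phi (phi y) (tad br phi x r)"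
proof (rule tensor_eq)
  fix a b
  note H = hl_facts[OF hl]
  let ?D = dual_map
  have lbr: "\<And>z. lin (br z)" using H(1) .
  have lphi: "lin phi" using H(3) .
  have wi2: "\<And>z w. br z (phi (phi w)) = br z w"
    using wi H(4) unfolding weakly_inv_def by metis
  define P where "P = (\<lambda>x y. tp r (?D (\<lambda>w. br (phi x) (phi w)) a) (?D (\<lambda>w. br (phi y) (phi w)) b))"
  define Q1 where "Q1 = (\<lambda>x y. tp r (?D (\<lambda>w. br (phi x) (br y w)) a) (?D (\<lambda>w. phi (phi w)) b))"
  define Q4 where "Q4 = (\<lambda>x y. tp r (?D (\<lambda>w. phi (phi w)) a) (?D (\<lambda>w. br (phi x) (br y w)) b))"
  have expand: "tp (tad br phi (phi x) (tad br phi y r)) a b = Q1 x y + P x y + P y x + Q4 x y" for x y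
  proof -
    have m: "(\<lambda>w. phi (br y w)) = (\<lambda>w. br (phi y) (phi w))" using H(5) by auto
    show ?thesis
      unfolding tp_tad P_def Q1_def Q4_def
      by (simp add: dual_comp lbr lphi m add.assoc)
  qed
  have jac: "(\<lambda>w. br (phi x) (br y w) - br (phi y) (br x w)) = (\<lambda>w. br (br x y) (phi w))"
  proof
    fix w
    have "br (phi x) (br y w) + br (phi y) (br w x) + br (phi w) (br x y) = 0" by (rule H(6))
    moreover have "br (phi y) (br w x) = - br (phi y) (br x w)"
      using H(4)[of w x] lin_uminus[OF lbr] by simp
    moreover have "br (phi w) (br x y) = - br (br x y) (phi w)" by (rule H(4))
    ultimately show "br (phi x) (br y w) - br (phi y) (br x w) = br (br x y) (phi w)"
      by (simp add: algebra_simps eq_neg_iff_add_eq_0)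
  qed
  let ?z = "br x y"
  have "Q1 x y - Q1 y x = tp r (?D (\<lambda>w. br ?z (phi w)) a) (?D (\<lambda>w. phi (phi w)) b)"
    unfolding Q1_def by (simp add: tp_diff1[symmetric] dual_fdiff[symmetric] jac)
  also have "\<dots> = tp r (?D phi (?D phi (?D (br ?z) a))) (?D phi b)"
    using G[of "?D phi (?D (br ?z) a)" "?D phi b"] by (simp add: dual_comp lbr lphi)
  also have "\<dots> = tp r (?D (br ?z) a) (?D phi b)"
    by (simp add: dual_comp lbr lphi wi2 lin_comp[OF lbr lphi])
  finally have q1: "Q1 x y - Q1 y x = tp r (?D (br ?z) a) (?D phi b)" .
  have "Q4 x y - Q4 y x = tp r (?D (\<lambda>w. phi (phi w)) a) (?D (\<lambda>w. br ?z (phi w)) b)"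
    unfolding Q4_def by (simp add: tp_diff2[symmetric] dual_fdiff[symmetric] jac)
  also have "\<dots> = tp r (?D phi a) (?D phi (?D phi (?D (br ?z) b)))"
    using G[of "?D phi a" "?D phi (?D (br ?z) b)"] by (simp add: dual_comp lbr lphi)
  also have "\<dots> = tp r (?D phi a) (?D (br ?z) b)"
    by (simp add: dual_comp lbr lphi wi2 lin_comp[OF lbr lphi])
  finally have q4: "Q4 x y - Q4 y x = tp r (?D phi a) (?D (br ?z) b)" .
  show "tp (tad br phi (br x y) r) a b =
    tp (tad br phi (phi x) (tad br phi y r) - tad br phi (phi y) (tad br phi x r)) a b"
  proof -
    have "tp (tad br phi (phi x) (tad br phi y r) - tad br phi (phi y) (tad br phi x r)) a b
      = (Q1 x y + P x y + P y x + Q4 x y) - (Q1 y x + P y x + P x y + Q4 y x)"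
      by (simp only: tp_diff_t expand)
    then show ?thesis using q1 q4 by (simp add: tp_tad algebra_simps)
  qed
qed




lemma sum_UNIV_sum: "(\<Sum>p\<in>(UNIV::('a::finite + 'b::finite) set). f p) =
    (\<Sum>i\<in>UNIV. f (Inl i)) + (\<Sum>i\<in>UNIV. f (Inr i))"
proof -
  have "sum f ((UNIV::'a set) <+> (UNIV::'b set)) = sum (f \<circ> Inl) UNIV + sum (f \<circ> Inr) UNIV"
    by (rule sum.Plus) simp_all
  then show ?thesis by (simp only: UNIV_Plus_UNIV comp_def)
qed

lemma ip_sum: "ip (a::('a::finite + 'b::finite) \<Rightarrow> 'k::comm_ring_1) b =
   ip (a \<circ> Inl) (b \<circ> Inl) + ip (a \<circ> Inr) (b \<circ> Inr)"
  by (simp only: ip_def sum_UNIV_sum comp_def)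

lemma ip_case: "ip (a::('a::finite + 'b::finite) \<Rightarrow> 'k::comm_ring_1) (case_sum X Y) =
   ip (a \<circ> Inl) X + ip (a \<circ> Inr) Y"
  by (simp add: ip_sum case_sum_o_inj)

lemma bvec_Inl: "bvec (Inl j) = case_sum (bvec j) (0::'b \<Rightarrow> 'k::zero_neq_one)"
  by (rule ext) (auto simp: bvec_def split: sum.split)
lemma bvec_Inr: "bvec (Inr j) = case_sum (0::'a \<Rightarrow> 'k::zero_neq_one) (bvec j)"
  by (rule ext) (auto simp: bvec_def split: sum.split)

lemma dual_case:
  fixes G :: "('i::finite \<Rightarrow> 'k::comm_ring_1) \<Rightarrow> ('a::finite \<Rightarrow> 'k)" and H :: "('i \<Rightarrow> 'k) \<Rightarrow> ('b::finite \<Rightarrow> 'k)"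
  shows "dual_map (\<lambda>X. case_sum (G X) (H X)) a = dual_map G (a \<circ> Inl) + dual_map H (a \<circ> Inr)"
  by (rule ext) (simp add: dual_ip ip_case)

lemma dual_Inl:
  fixes F :: "('a::finite + 'b::finite \<Rightarrow> 'k::comm_ring_1) \<Rightarrow> ('c::finite \<Rightarrow> 'k)"
  shows "dual_map F a \<circ> Inl = dual_map (\<lambda>X. F (case_sum X 0)) a"
  by (rule ext) (simp add: dual_ip bvec_Inl)
lemma dual_Inr:
  fixes F :: "('a::finite + 'b::finite \<Rightarrow> 'k::comm_ring_1) \<Rightarrow> ('c::finite \<Rightarrow> 'k)"
  shows "dual_map F a \<circ> Inr = dual_map (\<lambda>X. F (case_sum 0 X)) a"
  by (rule ext) (simp add: dual_ip bvec_Inr)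

lemma dual_const0[simp]: "dual_map (\<lambda>X::'i::finite \<Rightarrow> 'k. 0) (a::'j::finite \<Rightarrow> 'k::comm_ring_1) = 0"
  by (rule ext) (simp add: dual_ip)

lemma vec_sum_eq: "v \<circ> Inl = v' \<circ> Inl \<Longrightarrow> v \<circ> Inr = v' \<circ> Inr \<Longrightarrow> v = v'"
  by (rule ext) (metis comp_apply sum.exhaust)

lemma comp_plus: "(v + v') \<circ> f = (v \<circ> f) + (v' \<circ> f)" by (simp add: fun_eq_iff)
lemma comp_minus: "(v - v') \<circ> f = (v \<circ> f) - (v' \<circ> f)" by (simp add: fun_eq_iff)
lemma comp_uminus: "(- v) \<circ> f = - (v \<circ> f)" by (simp add: fun_eq_iff)
lemma comp_zero: "(0::'a \<Rightarrow> 'b::zero) \<circ> f = 0" by (simp add: fun_eq_iff)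

lemma lin_case_sum: "lin F \<Longrightarrow> lin G \<Longrightarrow> lin (\<lambda>w. case_sum (F w) (G w))"
  unfolding lin_def by (auto simp: fun_eq_iff split: sum.split)
lemma lin_Inl: "lin (\<lambda>w. w \<circ> Inl)" by (simp add: lin_def fun_eq_iff)
lemma lin_Inr: "lin (\<lambda>w. w \<circ> Inr)" by (simp add: lin_def fun_eq_iff)

lemma dual_fsmul: "dual_map (\<lambda>v. (\<lambda>i. c * f v i)) (a::'i::finite \<Rightarrow> 'k::comm_ring_1) = (\<lambda>i. c * dual_map f a i)"
  by (simp add: dual_map_def fun_eq_iff sum_distrib_left ac_simps)

lemma tmap_fadd1: "tmap (\<lambda>w. f w + g w) B t = tmap f B t + tmap g B t"
  by (simp add: tmap_def fun_eq_iff sum.distrib algebra_simps)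
lemma tmap_fadd2: "tmap A (\<lambda>w. f w + g w) t = tmap A f t + tmap A g t"
  by (simp add: tmap_def fun_eq_iff sum.distrib algebra_simps)
lemma tmap_fsmul1: "tmap (\<lambda>w. (\<lambda>i. c * f w i)) B t = (\<lambda>u v. c * tmap f B t u v)"
  by (simp add: tmap_def fun_eq_iff sum_distrib_left ac_simps)
lemma tmap_fsmul2: "tmap A (\<lambda>w. (\<lambda>i. c * f w i)) t = (\<lambda>u v. c * tmap A f t u v)"
  by (simp add: tmap_def fun_eq_iff sum_distrib_left ac_simps)




locale cor =
  fixes br :: "('n::finite \<Rightarrow> 'k::field) \<Rightarrow> ('n \<Rightarrow> 'k) \<Rightarrow> ('n \<Rightarrow> 'k)"
    and phi :: "('n \<Rightarrow> 'k) \<Rightarrow> ('n \<Rightarrow> 'k)"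
    and beta :: "('m::finite \<Rightarrow> 'k) \<Rightarrow> ('m \<Rightarrow> 'k)"
    and rho :: "('n \<Rightarrow> 'k) \<Rightarrow> ('m \<Rightarrow> 'k) \<Rightarrow> ('m \<Rightarrow> 'k)"
    and T :: "('m \<Rightarrow> 'k) \<Rightarrow> ('n \<Rightarrow> 'k)"
  assumes hl: "hom_lie br phi" and wi: "weakly_inv br phi"
    and rep: "hom_lie_rep br phi beta rho" and wir: "weakly_inv_rep phi rho"
    and ex: "\<forall>x v. rho (phi x) (beta (beta v)) = rho (phi x) v"
    and op: "O_operator br phi beta rho T"
begin

lemmas H = hl_facts[OF hl]
lemma lbr: "lin (br x)" by (rule H(1))
lemma lbr1: "lin (\<lambda>x. br x y)" by (rule H(2))
lemma lphi: "lin phi" by (rule H(3))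
lemma skew: "br x y = - br y x" by (rule H(4))
lemma mult: "phi (br x y) = br (phi x) (phi y)" by (rule H(5))
lemma jac: "br (phi x) (br y z) + br (phi y) (br z x) + br (phi z) (br x y) = 0" by (rule H(6))
lemma wi1: "br (phi (phi x)) y = br x y" using wi unfolding weakly_inv_def by blast
lemma lbeta: "lin beta" using rep unfolding hom_lie_rep_def by blast
lemma lrho: "lin (rho x)" using rep unfolding hom_lie_rep_def bilin_def by blast
lemma lrho1: "lin (\<lambda>x. rho x v)" using rep unfolding hom_lie_rep_def bilin_def by blast
lemma rep1: "rho (phi x) (beta v) = beta (rho x v)" using rep unfolding hom_lie_rep_def by blast
lemma rep2: "rho (br x y) (beta v) = rho (phi x) (rho y v) - rho (phi y) (rho x v)"
  using rep unfolding hom_lie_rep_def by blast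
lemma wir1: "rho (phi (phi x)) = rho x" using wir unfolding weakly_inv_rep_def by blast
lemma ex1: "rho (phi x) (beta (beta v)) = rho (phi x) v" using ex by blast
lemma lT: "lin T" using op unfolding O_operator_def by blast
lemma Tb: "T (beta v) = phi (T v)" using op unfolding O_operator_def by blast
lemma Oop: "br (T u) (T v) = T (rho (T u) v - rho (T v) u)" using op unfolding O_operator_def by blast

lemma br_add2: "br x (a + b) = br x a + br x b" by (rule lin_add[OF lbr])
lemma br_diff2: "br x (a - b) = br x a - br x b" by (rule lin_diff[OF lbr])
lemma br_uminus2: "br x (- a) = - br x a" by (rule lin_uminus[OF lbr])
lemma br_zero2[simp]: "br x 0 = 0" by (rule lin_zero[OF lbr])
lemma br_add1: "br (a + b) y = br a y + br b y" using lin_add[OF lbr1] .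
lemma br_diff1: "br (a - b) y = br a y - br b y" using lin_diff[OF lbr1] .
lemma br_uminus1: "br (- a) y = - br a y" using lin_uminus[OF lbr1] .
lemma br_zero1[simp]: "br 0 y = 0" using lin_zero[OF lbr1] .
lemma phi_add: "phi (a + b) = phi a + phi b" by (rule lin_add[OF lphi])
lemma phi_diff: "phi (a - b) = phi a - phi b" by (rule lin_diff[OF lphi])
lemma phi_uminus: "phi (- a) = - phi a" by (rule lin_uminus[OF lphi])
lemma phi_zero[simp]: "phi 0 = 0" by (rule lin_zero[OF lphi])
lemma T_add: "T (a + b) = T a + T b" by (rule lin_add[OF lT])
lemma T_diff: "T (a - b) = T a - T b" by (rule lin_diff[OF lT])
lemma T_uminus: "T (- a) = - T a" by (rule lin_uminus[OF lT])
lemma T_zero[simp]: "T 0 = 0" by (rule lin_zero[OF lT])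
lemma beta_add: "beta (a + b) = beta a + beta b" by (rule lin_add[OF lbeta])
lemma beta_diff: "beta (a - b) = beta a - beta b" by (rule lin_diff[OF lbeta])
lemma beta_uminus: "beta (- a) = - beta a" by (rule lin_uminus[OF lbeta])
lemma beta_zero[simp]: "beta 0 = 0" by (rule lin_zero[OF lbeta])
lemma rho_add2: "rho x (a + b) = rho x a + rho x b" by (rule lin_add[OF lrho])
lemma rho_diff2: "rho x (a - b) = rho x a - rho x b" by (rule lin_diff[OF lrho])
lemma rho_uminus2: "rho x (- a) = - rho x a" by (rule lin_uminus[OF lrho])
lemma rho_zero2[simp]: "rho x 0 = 0" by (rule lin_zero[OF lrho])
lemma rho_add1: "rho (a + b) v = rho a v + rho b v" using lin_add[OF lrho1] .
lemma rho_diff1: "rho (a - b) v = rho a v - rho b v" using lin_diff[OF lrho1] .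
lemma rho_uminus1: "rho (- a) v = - rho a v" using lin_uminus[OF lrho1] .
lemma rho_zero1[simp]: "rho 0 v = 0" using lin_zero[OF lrho1] .

lemmas linsimps = br_add2 br_diff2 br_uminus2 br_add1 br_diff1 br_uminus1 phi_add phi_diff phi_uminus
  T_add T_diff T_uminus beta_add beta_diff beta_uminus rho_add2 rho_diff2 rho_uminus2
  rho_add1 rho_diff1 rho_uminus1

lemma wi2: "br x (phi (phi y)) = br x y"
  by (metis skew wi1)
lemma phi2br: "phi (phi (br x y)) = br x y"
  by (simp add: mult wi1 wi2)
lemma phi2T: "phi (phi (T v)) = T (beta (beta v))"
  by (simp add: Tb)
lemma bb_rho_phi: "beta (beta (rho (phi z) v)) = rho (phi z) v"
proof -
  have "beta (beta (rho (phi z) v)) = beta (rho (phi (phi z)) (beta v))" by (simp add: rep1)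
  also have "\<dots> = rho (phi (phi (phi z))) (beta (beta v))" by (simp add: rep1)
  also have "\<dots> = rho (phi (phi (phi z))) v" by (rule ex1)
  also have "\<dots> = rho (phi z) v" by (simp add: wir1)
  finally show ?thesis .
qed
lemma bb_rho: "beta (beta (rho x v)) = rho x v"
  using bb_rho_phi[of "phi x" v] by (simp add: wir1)
lemma rho_bb: "rho x (beta (beta v)) = rho x v"
  using ex1[of "phi x" v] by (simp add: wir1)
lemma rho_b: "rho x (beta v) = beta (rho (phi x) v)"
  using rep1[of "phi x" v] by (simp add: wir1)

end


context cor begin

definition R where "R x xi = dual_map (rho (phi x)) xi"

lemma lR: "lin (R x)" unfolding R_def by (rule lin_dual)
lemma R_add2: "R x (a + b) = R x a + R x b" by (simp add: R_def dual_add)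
lemma R_diff2: "R x (a - b) = R x a - R x b" by (simp add: R_def dual_diff)
lemma R_uminus2: "R x (- a) = - R x a" by (simp add: R_def dual_uminus)
lemma R_zero2[simp]: "R x 0 = 0" by (simp add: R_def)
lemma R_add1: "R (a + b) xi = R a xi + R b xi"
proof -
  have "rho (phi (a + b)) = (\<lambda>v. rho (phi a) v + rho (phi b) v)"
    by (simp add: fun_eq_iff phi_add rho_add1)
  then show ?thesis by (simp add: R_def dual_fadd)
qed
lemma R_smul1: "R (\<lambda>i. c * a i) xi = (\<lambda>i. c * R a xi i)"
proof -
  have "rho (phi (\<lambda>i. c * a i)) = (\<lambda>v. (\<lambda>i. c * rho (phi a) v i))"
    by (simp add: fun_eq_iff lin_smul[OF lphi] lin_smul[OF lrho1])
  then show ?thesis by (simp add: R_def dual_fsmul)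
qed
lemma lR1: "lin (\<lambda>x. R x xi)"
  unfolding lin_def using R_add1 R_smul1 by blast
lemma R_zero1[simp]: "R 0 xi = 0" by (rule lin_zero[OF lR1])

lemma R_beta: "dual_map beta (R x xi) = R (phi x) (dual_map beta xi)"
proof -
  have "dual_map beta (R x xi) = dual_map (\<lambda>v. rho (phi x) (beta v)) xi"
    unfolding R_def by (rule dual_comp[OF lrho])
  also have "\<dots> = dual_map (\<lambda>v. beta (rho (phi (phi x)) v)) xi"
    by (simp add: rep1 wir1)
  also have "\<dots> = R (phi x) (dual_map beta xi)"
    unfolding R_def by (rule dual_comp[OF lbeta, symmetric])
  finally show ?thesis .
qed

lemma R_br: "R (br y z) (dual_map beta xi) = R (phi z) (R y xi) - R (phi y) (R z xi)"
proof -
  have "R (br y z) (dual_map beta xi) = dual_map (\<lambda>v. beta (rho (phi (br y z)) v)) xi"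
    unfolding R_def by (rule dual_comp[OF lbeta])
  also have "\<dots> = dual_map (\<lambda>v. rho (phi y) (rho z v) - rho (phi z) (rho y v)) xi"
  proof -
    have "\<And>v. beta (rho (phi (br y z)) v) = rho (phi y) (rho z v) - rho (phi z) (rho y v)"
      using rep1[of "phi (br y z)"] by (simp add: phi2br rep2 rep1[symmetric])
    then show ?thesis by simp
  qed
  also have "\<dots> = dual_map (\<lambda>v. rho (phi y) (rho (phi (phi z)) v)) xi
                  - dual_map (\<lambda>v. rho (phi z) (rho (phi (phi y)) v)) xi"
    by (simp add: dual_fdiff wir1)
  also have "\<dots> = R (phi z) (R y xi) - R (phi y) (R z xi)"
    unfolding R_def by (simp add: dual_comp[OF lrho])
  finally show ?thesis .
qed

lemma R_phi2: "R (phi (phi x)) = R x"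
  by (rule ext) (simp add: R_def wir1)
lemma R_bb: "R y (dual_map beta (dual_map beta xi)) = R y xi"
proof -
  have "R y (dual_map beta (dual_map beta xi)) = dual_map (\<lambda>v. beta (rho (phi y) v)) (dual_map beta xi)"
    unfolding R_def by (rule dual_comp[OF lbeta])
  also have "\<dots> = dual_map (\<lambda>v. beta (beta (rho (phi y) v))) xi"
    by (rule dual_comp[OF lbeta])
  finally have "R y (dual_map beta (dual_map beta xi)) = dual_map (\<lambda>v. beta (beta (rho (phi y) v))) xi" .
  then show ?thesis by (simp add: bb_rho R_def)
qed

abbreviation "dbr \<equiv> sd_br br phi rho"
abbreviation "dphi \<equiv> sd_phi phi beta"

lemma dbr_Inl: "dbr w w' \<circ> Inl = br (w \<circ> Inl) (w' \<circ> Inl)"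
  by (simp add: sd_br_def case_sum_o_inj)
lemma dbr_Inr: "dbr w w' \<circ> Inr = R (w' \<circ> Inl) (w \<circ> Inr) - R (w \<circ> Inl) (w' \<circ> Inr)"
  by (simp add: sd_br_def case_sum_o_inj rho_circ_def R_def)
lemma dphi_Inl: "dphi w \<circ> Inl = phi (w \<circ> Inl)"
  by (simp add: sd_phi_def case_sum_o_inj)
lemma dphi_Inr: "dphi w \<circ> Inr = dual_map beta (w \<circ> Inr)"
  by (simp add: sd_phi_def case_sum_o_inj)

lemma dbr_alt: "dbr w w' = case_sum (br (w \<circ> Inl) (w' \<circ> Inl)) (R (w' \<circ> Inl) (w \<circ> Inr) - R (w \<circ> Inl) (w' \<circ> Inr))"
  by (rule vec_sum_eq) (simp_all add: dbr_Inl dbr_Inr case_sum_o_inj)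
lemma dphi_alt: "dphi w = case_sum (phi (w \<circ> Inl)) (dual_map beta (w \<circ> Inr))"
  by (simp add: sd_phi_def)

lemma lin_dbr2: "lin (dbr w)"
proof -
  have "lin (\<lambda>w'. case_sum (br (w \<circ> Inl) (w' \<circ> Inl)) (R (w' \<circ> Inl) (w \<circ> Inr) - R (w \<circ> Inl) (w' \<circ> Inr)))"
    by (intro lin_case_sum lin_fdiff lin_comp[OF lbr lin_Inl] lin_comp[OF lR1 lin_Inl] lin_comp[OF lR lin_Inr])
  moreover have "dbr w = (\<lambda>w'. case_sum (br (w \<circ> Inl) (w' \<circ> Inl)) (R (w' \<circ> Inl) (w \<circ> Inr) - R (w \<circ> Inl) (w' \<circ> Inr)))"
    by (rule ext) (rule dbr_alt)
  ultimately show ?thesis by simp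
qed
lemma lin_dbr1: "lin (\<lambda>w. dbr w w')"
proof -
  have "lin (\<lambda>w. case_sum (br (w \<circ> Inl) (w' \<circ> Inl)) (R (w' \<circ> Inl) (w \<circ> Inr) - R (w \<circ> Inl) (w' \<circ> Inr)))"
    by (intro lin_case_sum lin_fdiff lin_comp[OF lbr1 lin_Inl] lin_comp[OF lR1 lin_Inl] lin_comp[OF lR lin_Inr])
  then show ?thesis by (simp only: dbr_alt)
qed
lemma lin_dphi: "lin dphi"
proof -
  have "lin (\<lambda>w. case_sum (phi (w \<circ> Inl)) (dual_map beta (w \<circ> Inr)))"
    by (intro lin_case_sum lin_comp[OF lphi lin_Inl] lin_comp[OF lin_dual lin_Inr])
  moreover have "dphi = (\<lambda>w. case_sum (phi (w \<circ> Inl)) (dual_map beta (w \<circ> Inr)))"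
    by (rule ext) (rule dphi_alt)
  ultimately show ?thesis by simp
qed

lemma jac_Inr: "dbr (dphi x) (dbr y z) \<circ> Inr =
   R (phi (z \<circ> Inl)) (R (y \<circ> Inl) (x \<circ> Inr)) - R (phi (y \<circ> Inl)) (R (z \<circ> Inl) (x \<circ> Inr))
   - R (phi (x \<circ> Inl)) (R (z \<circ> Inl) (y \<circ> Inr)) + R (phi (x \<circ> Inl)) (R (y \<circ> Inl) (z \<circ> Inr))"
proof -
  have "dbr (dphi x) (dbr y z) \<circ> Inr = R (br (y \<circ> Inl) (z \<circ> Inl)) (dual_map beta (x \<circ> Inr))
     - R (phi (x \<circ> Inl)) (R (z \<circ> Inl) (y \<circ> Inr) - R (y \<circ> Inl) (z \<circ> Inr))"
    by (simp only: dbr_Inr dbr_Inl dphi_Inl dphi_Inr)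
  then show ?thesis by (simp only: R_br R_diff2 diff_diff_eq2 diff_add_eq)
qed

lemma d_hom_lie: "hom_lie dbr dphi"
  unfolding hom_lie_def bilin_def
proof (intro conjI allI)
  show "lin (dbr x)" for x by (rule lin_dbr2)
  show "lin (\<lambda>x. dbr x y)" for y by (rule lin_dbr1)
  show "lin dphi" by (rule lin_dphi)
  show "dbr x y = - dbr y x" for x y
    by (rule vec_sum_eq) (simp_all only: dbr_Inl dbr_Inr comp_uminus skew[of "x \<circ> Inl"] minus_diff_eq)
  show "dphi (dbr x y) = dbr (dphi x) (dphi y)" for x y
    by (rule vec_sum_eq) (simp_all only: dbr_Inl dbr_Inr dphi_Inl dphi_Inr mult dual_diff R_beta)
  show "dbr (dphi x) (dbr y z) + dbr (dphi y) (dbr z x) + dbr (dphi z) (dbr x y) = 0" for x y z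
  proof (rule vec_sum_eq)
    show "(dbr (dphi x) (dbr y z) + dbr (dphi y) (dbr z x) + dbr (dphi z) (dbr x y)) \<circ> Inl = 0 \<circ> Inl"
      by (simp only: comp_plus comp_zero dbr_Inl dphi_Inl jac)
    show "(dbr (dphi x) (dbr y z) + dbr (dphi y) (dbr z x) + dbr (dphi z) (dbr x y)) \<circ> Inr = 0 \<circ> Inr"
      by (simp only: comp_plus comp_zero jac_Inr) (simp add: algebra_simps)
  qed
qed

lemma d_wi: "weakly_inv dbr dphi"
  unfolding weakly_inv_def
proof (intro allI)
  fix x y
  show "dbr (dphi (dphi x)) y = dbr x y"
    by (rule vec_sum_eq) (simp_all only: dbr_Inl dbr_Inr dphi_Inl dphi_Inr wi1 R_phi2 R_bb)
qed

end


context cor begin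

abbreviation "rr \<equiv> Tbar T - flip (Tbar T)"

lemma tp_Tbar: "tp (Tbar T) a b = ip (b \<circ> Inl) (T (a \<circ> Inr))"
proof -
  have "tp (Tbar T) a b = (\<Sum>i\<in>UNIV. \<Sum>j\<in>UNIV. T (bvec i) j * a (Inr i) * b (Inl j))"
    by (simp add: tp_def sum_UNIV_sum Tbar_def)
  also have "\<dots> = (\<Sum>j\<in>UNIV. \<Sum>i\<in>UNIV. T (bvec i) j * a (Inr i) * b (Inl j))"
    by (rule sum.swap)
  also have "\<dots> = (\<Sum>j\<in>UNIV. b (Inl j) * (\<Sum>i\<in>UNIV. (a \<circ> Inr) i * T (bvec i) j))"
    by (simp add: sum_distrib_left ac_simps)
  also have "\<dots> = (\<Sum>j\<in>UNIV. b (Inl j) * T (a \<circ> Inr) j)"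
    by (simp add: lin_expand[OF lT, of "a \<circ> Inr"])
  also have "\<dots> = ip (b \<circ> Inl) (T (a \<circ> Inr))"
    by (simp add: ip_def)
  finally show ?thesis .
qed

lemma tp_r: "tp rr a b = ip (b \<circ> Inl) (T (a \<circ> Inr)) - ip (a \<circ> Inl) (T (b \<circ> Inr))"
  by (simp only: tp_diff_t tp_flip tp_Tbar)

lemma Dphi_Inl: "dual_map dphi a \<circ> Inl = dual_map phi (a \<circ> Inl)"
proof -
  have "dual_map dphi a \<circ> Inl = dual_map (\<lambda>X. case_sum (phi X) (0::'m \<Rightarrow> 'k)) a"
    apply (simp only: dual_Inl)
    apply (rule arg_cong[where f="\<lambda>f. dual_map f a"])
    apply (rule ext)
    apply (simp add: dphi_alt case_sum_o_inj)
    done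
  also have "\<dots> = dual_map phi (a \<circ> Inl)"
    by (simp add: dual_case)
  finally show ?thesis .
qed

lemma Dphi_Inr: "dual_map dphi a \<circ> Inr = beta (a \<circ> Inr)"
proof -
  have "dual_map dphi a \<circ> Inr = dual_map (\<lambda>Z. case_sum (0::'n \<Rightarrow> 'k) (dual_map beta Z)) a"
    apply (simp only: dual_Inr)
    apply (rule arg_cong[where f="\<lambda>f. dual_map f a"])
    apply (rule ext)
    apply (simp add: dphi_alt case_sum_o_inj)
    done
  also have "\<dots> = beta (a \<circ> Inr)"
    by (simp add: dual_case dual_dual[OF lbeta])
  finally show ?thesis .
qed

lemma Dad_Inl: "dual_map (dbr x) a \<circ> Inl =
   dual_map (br (x \<circ> Inl)) (a \<circ> Inl) + dual_map (\<lambda>X. R X (x \<circ> Inr)) (a \<circ> Inr)"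
proof -
  have "dual_map (dbr x) a \<circ> Inl = dual_map (\<lambda>X. case_sum (br (x \<circ> Inl) X) (R X (x \<circ> Inr))) a"
    apply (simp only: dual_Inl)
    apply (rule arg_cong[where f="\<lambda>f. dual_map f a"])
    apply (rule ext)
    apply (simp add: dbr_alt case_sum_o_inj)
    done
  also have "\<dots> = dual_map (br (x \<circ> Inl)) (a \<circ> Inl) + dual_map (\<lambda>X. R X (x \<circ> Inr)) (a \<circ> Inr)"
    by (rule dual_case)
  finally show ?thesis .
qed

lemma Dad_Inr: "dual_map (dbr x) a \<circ> Inr = - rho (phi (x \<circ> Inl)) (a \<circ> Inr)"
proof -
  have "dual_map (dbr x) a \<circ> Inr = dual_map (\<lambda>Z. case_sum (0::'n \<Rightarrow> 'k) (- R (x \<circ> Inl) Z)) a"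
    apply (simp only: dual_Inr)
    apply (rule arg_cong[where f="\<lambda>f. dual_map f a"])
    apply (rule ext)
    apply (simp add: dbr_alt case_sum_o_inj)
    done
  also have "\<dots> = - dual_map (R (x \<circ> Inl)) (a \<circ> Inr)"
    by (simp add: dual_case dual_fuminus)
  also have "\<dots> = - rho (phi (x \<circ> Inl)) (a \<circ> Inr)"
  proof -
    have "R (x \<circ> Inl) = dual_map (rho (phi (x \<circ> Inl)))" by (rule ext) (simp add: R_def)
    then show ?thesis by (simp only: dual_dual[OF lrho])
  qed
  finally show ?thesis .
qed

lemma Gr: "tp rr (dual_map dphi a) b = tp rr a (dual_map dphi b)"
proof -
  have "tp rr (dual_map dphi a) b = ip (b \<circ> Inl) (T (beta (a \<circ> Inr))) - ip (a \<circ> Inl) (phi (T (b \<circ> Inr)))"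
    by (simp only: tp_r Dphi_Inl Dphi_Inr ip_dual[OF lphi])
  moreover have "tp rr a (dual_map dphi b) = ip (b \<circ> Inl) (phi (T (a \<circ> Inr))) - ip (a \<circ> Inl) (T (beta (b \<circ> Inr)))"
    by (simp only: tp_r Dphi_Inl Dphi_Inr ip_dual[OF lphi])
  ultimately show ?thesis by (simp add: Tb)
qed

lemma r_phi: "tmap dphi id rr = tmap id dphi rr"
  by (rule tensor_eq) (simp only: tp_tmap dual_id' Gr)

lemma cocycle: "tad dbr dphi (dbr x y) rr = tad dbr dphi (dphi x) (tad dbr dphi y rr) - tad dbr dphi (dphi y) (tad dbr dphi x rr)"
  by (rule cocycle_generic[OF d_hom_lie d_wi Gr])

definition L where "L w y = phi (T (rho (phi y) w)) + br (phi (T w)) y"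

lemma lL: "lin (L w)"
proof -
  have "lin (\<lambda>y. phi (T (rho (phi y) w)) + br (phi (T w)) y)"
    by (intro lin_fadd lin_comp[OF lphi] lin_comp[OF lT] lin_comp[OF lrho1 lphi] lbr)
  moreover have "L w = (\<lambda>y. phi (T (rho (phi y) w)) + br (phi (T w)) y)"
    by (rule ext) (simp add: L_def)
  ultimately show ?thesis by simp
qed

lemma ipR: "ip (dual_map (\<lambda>X. R X xi) u) v = ip xi (rho (phi v) u)"
proof -
  have "ip (dual_map (\<lambda>X. R X xi) u) v = ip u (R v xi)" by (rule ip_dual[OF lR1])
  also have "\<dots> = ip (dual_map (rho (phi v)) xi) u" by (simp add: R_def ip_comm)
  also have "\<dots> = ip xi (rho (phi v) u)" by (rule ip_dual[OF lrho])
  finally show ?thesis .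
qed

lemma E_formula: "tp (tad dbr dphi x rr) a b =
   ip (a \<circ> Inl) (L (b \<circ> Inr) (x \<circ> Inl)) - ip (b \<circ> Inl) (L (a \<circ> Inr) (x \<circ> Inl))
   + ip (x \<circ> Inr) (rho (T (a \<circ> Inr)) (b \<circ> Inr) - rho (T (b \<circ> Inr)) (a \<circ> Inr))"
proof -
  define y where "y = x \<circ> Inl"
  define xi where "xi = x \<circ> Inr"
  define al where "al = a \<circ> Inl"
  define u where "u = a \<circ> Inr"
  define ga where "ga = b \<circ> Inl"
  define w where "w = b \<circ> Inr"
  have rT: "\<And>v. rho (phi (T (beta v))) = rho (T v)" by (simp add: Tb wir1)
  have bT: "\<And>v. br y (T (beta v)) = - br (phi (T v)) y" by (simp add: Tb skew[of y])
  have t1: "tp rr (dual_map (dbr x) a) (dual_map dphi b) =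
     - ip ga (phi (T (rho (phi y) u))) + ip al (br (phi (T w)) y) - ip xi (rho (T w) u)"
  proof -
    have "tp rr (dual_map (dbr x) a) (dual_map dphi b) =
      ip (dual_map phi ga) (T (- rho (phi y) u)) -
      ip (dual_map (br y) al + dual_map (\<lambda>X. R X xi) u) (T (beta w))"
      by (simp only: tp_r Dad_Inl Dad_Inr Dphi_Inl Dphi_Inr y_def xi_def al_def u_def ga_def w_def)
    also have "\<dots> = - ip ga (phi (T (rho (phi y) u))) - ip al (br y (T (beta w))) - ip xi (rho (phi (T (beta w))) u)"
      by (simp add: ip_dual[OF lphi] ip_dual[OF lbr] ipR ip_lin T_uminus phi_uminus)
    finally show ?thesis by (simp add: rT bT ip_lin)
  qed
  have t2: "tp rr (dual_map dphi a) (dual_map (dbr x) b) =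
     - ip ga (br (phi (T u)) y) + ip xi (rho (T u) w) + ip al (phi (T (rho (phi y) w)))"
  proof -
    have "tp rr (dual_map dphi a) (dual_map (dbr x) b) =
      ip (dual_map (br y) ga + dual_map (\<lambda>X. R X xi) w) (T (beta u)) -
      ip (dual_map phi al) (T (- rho (phi y) w))"
      by (simp only: tp_r Dad_Inl Dad_Inr Dphi_Inl Dphi_Inr y_def xi_def al_def u_def ga_def w_def)
    also have "\<dots> = ip ga (br y (T (beta u))) + ip xi (rho (phi (T (beta u))) w) + ip al (phi (T (rho (phi y) w)))"
      by (simp add: ip_dual[OF lphi] ip_dual[OF lbr] ipR ip_lin T_uminus phi_uminus)
    finally show ?thesis by (simp add: rT bT ip_lin)
  qed
  have "tp (tad dbr dphi x rr) a b = tp rr (dual_map (dbr x) a) (dual_map dphi b) + tp rr (dual_map dphi a) (dual_map (dbr x) b)"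
    by (rule tp_tad)
  also have "\<dots> = ip al (L w y) - ip ga (L u y) + ip xi (rho (T u) w - rho (T w) u)"
    unfolding t1 t2 L_def by (simp add: ip_lin)
  finally show ?thesis by (simp add: y_def xi_def al_def u_def ga_def w_def)
qed

end


context cor begin

lemma Lb: "L (beta z) y = T (rho y z) + br (T z) y"
proof -
  have "L (beta z) y = phi (T (rho (phi y) (beta z))) + br (phi (T (beta z))) y" by (simp only: L_def)
  also have "\<dots> = phi (T (beta (rho y z))) + br (phi (phi (T z))) y" by (simp only: rep1 Tb)
  also have "\<dots> = phi (phi (T (rho y z))) + br (T z) y" by (simp only: Tb wi1)
  also have "\<dots> = T (rho y z) + br (T z) y" by (simp only: phi2T bb_rho)
  finally show ?thesis .
qed

lemma La: "phi (L v y) = T (rho (phi y) v) + br (phi (phi (T v))) (phi y)"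
proof -
  have "phi (L v y) = phi (phi (T (rho (phi y) v))) + phi (br (phi (T v)) y)"
    by (simp only: L_def phi_add)
  also have "\<dots> = T (rho (phi y) v) + br (phi (phi (T v))) (phi y)"
    by (simp only: phi2T bb_rho mult)
  finally show ?thesis .
qed

lemma Lw: "L w P = T (rho P (beta w)) + br (phi (T w)) P"
proof -
  have "phi (T (rho (phi P) w)) = T (rho P (beta w))"
  proof -
    have "phi (T (rho (phi P) w)) = T (beta (rho (phi P) w))" by (simp only: Tb)
    also have "\<dots> = T (rho (phi (phi P)) (beta w))" by (simp only: rep1)
    also have "\<dots> = T (rho P (beta w))" by (simp only: wir1)
    finally show ?thesis .
  qed
  then show ?thesis by (simp only: L_def)
qed

lemma Lc: "L w (L (beta z) y) = T (rho (phi (T z)) (rho y w)) - T (rho (phi y) (rho (T z) w))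
   + T (rho (phi (T w)) (rho y z)) + br (phi (T w)) (br (T z) y)"
proof -
  have o: "br (phi (T w)) (T (rho y z)) = T (rho (phi (T w)) (rho y z)) - T (rho (T (rho y z)) (beta w))"
    using Oop[of "beta w" "rho y z"] by (simp only: Tb T_diff)
  have "L w (L (beta z) y) = L w (T (rho y z) + br (T z) y)" by (simp only: Lb)
  also have "\<dots> = T (rho (T (rho y z) + br (T z) y) (beta w)) + br (phi (T w)) (T (rho y z) + br (T z) y)"
    by (rule Lw)
  also have "\<dots> = T (rho (T (rho y z)) (beta w)) + T (rho (phi (T z)) (rho y w)) - T (rho (phi y) (rho (T z) w))
      + br (phi (T w)) (T (rho y z)) + br (phi (T w)) (br (T z) y)"
    by (simp only: rho_add1 rep2 T_add T_diff br_add2) (simp add: algebra_simps)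
  also have "\<dots> = T (rho (phi (T z)) (rho y w)) - T (rho (phi y) (rho (T z) w))
   + T (rho (phi (T w)) (rho y z)) + br (phi (T w)) (br (T z) y)"
    by (simp only: o) (simp add: algebra_simps)
  finally show ?thesis .
qed

abbreviation "VB w z \<equiv> rho (T w) z - rho (T z) w"

lemma J2: "phi (L (VB w z) y) = L w (L (beta z) y) - L z (L (beta w) y)"
proof -
  have tv: "T (VB w z) = br (T w) (T z)" by (simp only: Oop)
  have j: "br (phi (T w)) (br (T z) y) - br (phi (T z)) (br (T w) y) = br (br (T w) (T z)) (phi y)"
  proof -
    have "br (phi (T w)) (br (T z) y) + br (phi (T z)) (br y (T w)) + br (phi y) (br (T w) (T z)) = 0"
      by (rule jac)
    moreover have "br (phi (T z)) (br y (T w)) = - br (phi (T z)) (br (T w) y)"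
      by (simp only: skew[of y] br_uminus2)
    moreover have "br (phi y) (br (T w) (T z)) = - br (br (T w) (T z)) (phi y)"
      by (rule skew)
    ultimately show ?thesis by (simp add: algebra_simps eq_neg_iff_add_eq_0)
  qed
  have "phi (L (VB w z) y) = T (rho (phi y) (rho (T w) z)) - T (rho (phi y) (rho (T z) w)) + br (br (T w) (T z)) (phi y)"
    by (simp only: La tv phi2br) (simp only: rho_diff2 T_diff)
  also have "\<dots> = L w (L (beta z) y) - L z (L (beta w) y)"
    by (simp only: Lc j[symmetric]) (simp add: algebra_simps)
  finally show ?thesis .
qed

lemma L_phi: "L w (phi y) = phi (L (beta w) y)"
proof -
  have "phi (L (beta w) y) = phi (T (rho y w)) + br (phi (T w)) (phi y)" by (simp only: Lb phi_add mult)
  moreover have "L w (phi y) = phi (T (rho y w)) + br (phi (T w)) (phi y)" by (simp only: L_def wir1)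
  ultimately show ?thesis by simp
qed

lemma L_phi2: "phi (phi (L w y)) = L w y"
proof -
  have "phi (phi (phi (T (rho (phi y) w)))) = phi (T (rho (phi y) w))"
    by (simp only: phi2T bb_rho)
  then show ?thesis by (simp only: L_def phi_add phi2br)
qed

lemma L_bb: "L (beta (beta u)) = L u"
proof
  fix y
  have "phi (T (beta (beta u))) = phi (phi (phi (T u)))" by (simp only: Tb)
  then show "L (beta (beta u)) y = L u y" by (simp only: L_def rho_bb wi1)
qed

lemma J1: "rho (T (beta u)) (VB w z) - rho (T (VB w z)) (beta u)
   + (rho (T (beta w)) (VB z u) - rho (T (VB z u)) (beta w))
   + (rho (T (beta z)) (VB u w) - rho (T (VB u w)) (beta z)) = 0"
  by (simp only: Tb Oop[symmetric] rep2 rho_diff2) (simp add: algebra_simps)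

end



lemma bilin_dual_br: "bilin (dual_br (Delta::('i::finite \<Rightarrow> 'k::comm_ring_1) \<Rightarrow> 'i \<Rightarrow> 'i \<Rightarrow> 'k))"
  unfolding bilin_def lin_def dual_br_def
  by (simp add: fun_eq_iff sum.distrib sum_distrib_left algebra_simps)

context cor begin

abbreviation "Dl \<equiv> (\<lambda>x. tad dbr dphi x rr)"

lemma bvec_Inl_comp: "bvec (Inl i) \<circ> Inl = bvec i" "bvec (Inl i) \<circ> Inr = 0"
  by (simp_all add: bvec_Inl case_sum_o_inj)
lemma bvec_Inr_comp: "bvec (Inr i) \<circ> Inl = 0" "bvec (Inr i) \<circ> Inr = bvec i"
  by (simp_all add: bvec_Inr case_sum_o_inj)

lemma DB: "dual_br Dl a b = case_sum (dual_map (L (b \<circ> Inr)) (a \<circ> Inl) - dual_map (L (a \<circ> Inr)) (b \<circ> Inl))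
   (rho (T (a \<circ> Inr)) (b \<circ> Inr) - rho (T (b \<circ> Inr)) (a \<circ> Inr))"
proof
  fix k
  have "dual_br Dl a b k = tp (Dl (bvec k)) a b" by (simp only: dual_br_def tp_def)
  also have "\<dots> = case_sum (dual_map (L (b \<circ> Inr)) (a \<circ> Inl) - dual_map (L (a \<circ> Inr)) (b \<circ> Inl))
   (rho (T (a \<circ> Inr)) (b \<circ> Inr) - rho (T (b \<circ> Inr)) (a \<circ> Inr)) k"
  proof (cases k)
    case (Inl i)
    then show ?thesis by (simp add: E_formula bvec_Inl_comp dual_ip)
  next
    case (Inr i)
    then show ?thesis by (simp add: E_formula bvec_Inr_comp lin_zero[OF lL])
  qed
  finally show "dual_br Dl a b k = case_sum (dual_map (L (b \<circ> Inr)) (a \<circ> Inl) - dual_map (L (a \<circ> Inr)) (b \<circ> Inl))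
   (rho (T (a \<circ> Inr)) (b \<circ> Inr) - rho (T (b \<circ> Inr)) (a \<circ> Inr)) k" .
qed

lemma DB_Inl: "dual_br Dl a b \<circ> Inl = dual_map (L (b \<circ> Inr)) (a \<circ> Inl) - dual_map (L (a \<circ> Inr)) (b \<circ> Inl)"
  by (simp only: DB case_sum_o_inj)
lemma DB_Inr: "dual_br Dl a b \<circ> Inr = rho (T (a \<circ> Inr)) (b \<circ> Inr) - rho (T (b \<circ> Inr)) (a \<circ> Inr)"
  by (simp only: DB case_sum_o_inj)

lemma DD_skew: "dual_br Dl a b = - dual_br Dl b a"
  by (rule vec_sum_eq) (simp_all only: DB_Inl DB_Inr comp_uminus minus_diff_eq)

lemma DD_mult: "dual_map dphi (dual_br Dl a b) = dual_br Dl (dual_map dphi a) (dual_map dphi b)"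
proof (rule vec_sum_eq)
  have e: "\<And>w al. dual_map phi (dual_map (L w) al) = dual_map (L (beta w)) (dual_map phi al)"
  proof -
    fix w al
    have "dual_map phi (dual_map (L w) al) = dual_map (\<lambda>y. L w (phi y)) al" by (rule dual_comp[OF lL])
    also have "\<dots> = dual_map (\<lambda>y. phi (L (beta w) y)) al" by (simp only: L_phi)
    also have "\<dots> = dual_map (L (beta w)) (dual_map phi al)" by (rule dual_comp[OF lphi, symmetric])
    finally show "dual_map phi (dual_map (L w) al) = dual_map (L (beta w)) (dual_map phi al)" .
  qed
  show "dual_map dphi (dual_br Dl a b) \<circ> Inl = dual_br Dl (dual_map dphi a) (dual_map dphi b) \<circ> Inl"
    by (simp only: DB_Inl Dphi_Inl Dphi_Inr dual_diff e)
  have e2: "\<And>u w. beta (rho (T u) w) = rho (T (beta u)) (beta w)" by (simp only: Tb rep1)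
  show "dual_map dphi (dual_br Dl a b) \<circ> Inr = dual_br Dl (dual_map dphi a) (dual_map dphi b) \<circ> Inr"
    by (simp only: DB_Inr Dphi_Inr beta_diff e2)
qed

lemma DD_wi: "dual_br Dl (dual_map dphi (dual_map dphi a)) b = dual_br Dl a b"
proof (rule vec_sum_eq)
  have e: "\<And>w al. dual_map (L w) (dual_map phi (dual_map phi al)) = dual_map (L w) al"
  proof -
    fix w al
    have "dual_map (L w) (dual_map phi (dual_map phi al)) = dual_map (\<lambda>y. phi (L w y)) (dual_map phi al)"
      by (rule dual_comp[OF lphi])
    also have "\<dots> = dual_map (\<lambda>y. phi (phi (L w y))) al" by (rule dual_comp[OF lphi])
    also have "\<dots> = dual_map (L w) al" by (simp only: L_phi2)
    finally show "dual_map (L w) (dual_map phi (dual_map phi al)) = dual_map (L w) al" .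
  qed
  show "dual_br Dl (dual_map dphi (dual_map dphi a)) b \<circ> Inl = dual_br Dl a b \<circ> Inl"
    by (simp only: DB_Inl Dphi_Inl Dphi_Inr e L_bb)
  have e2: "\<And>u. T (beta (beta u)) = phi (phi (T u))" by (simp only: Tb)
  show "dual_br Dl (dual_map dphi (dual_map dphi a)) b \<circ> Inr = dual_br Dl a b \<circ> Inr"
    by (simp only: DB_Inr Dphi_Inr e2 wir1 rho_bb)
qed

lemma DD_jac: "dual_br Dl (dual_map dphi a) (dual_br Dl b c) + dual_br Dl (dual_map dphi b) (dual_br Dl c a)
   + dual_br Dl (dual_map dphi c) (dual_br Dl a b) = 0"
proof (rule vec_sum_eq)
  define al where "al = a \<circ> Inl"
  define u where "u = a \<circ> Inr"
  define ga where "ga = b \<circ> Inl"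
  define w where "w = b \<circ> Inr"
  define de where "de = c \<circ> Inl"
  define z where "z = c \<circ> Inr"
  show "(dual_br Dl (dual_map dphi a) (dual_br Dl b c) + dual_br Dl (dual_map dphi b) (dual_br Dl c a)
   + dual_br Dl (dual_map dphi c) (dual_br Dl a b)) \<circ> Inr = 0 \<circ> Inr"
    using J1[of u w z] by (simp only: comp_plus comp_zero DB_Inr Dphi_Inr u_def w_def z_def)
  have comp: "\<And>p q r. (dual_br Dl (dual_map dphi p) (dual_br Dl q r)) \<circ> Inl =
     dual_map (L (VB (q \<circ> Inr) (r \<circ> Inr))) (dual_map phi (p \<circ> Inl))
     - dual_map (L (beta (p \<circ> Inr))) (dual_map (L (r \<circ> Inr)) (q \<circ> Inl) - dual_map (L (q \<circ> Inr)) (r \<circ> Inl))"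
    by (simp only: DB_Inl DB_Inr Dphi_Inl Dphi_Inr)
  have ipL: "\<And>p q r i. (dual_map (L (VB (q \<circ> Inr) (r \<circ> Inr))) (dual_map phi (p \<circ> Inl))
     - dual_map (L (beta (p \<circ> Inr))) (dual_map (L (r \<circ> Inr)) (q \<circ> Inl) - dual_map (L (q \<circ> Inr)) (r \<circ> Inl))) i
     = ip (p \<circ> Inl) (L (q \<circ> Inr) (L (beta (r \<circ> Inr)) (bvec i)) - L (r \<circ> Inr) (L (beta (q \<circ> Inr)) (bvec i)))
       - ip (q \<circ> Inl) (L (r \<circ> Inr) (L (beta (p \<circ> Inr)) (bvec i)))
       + ip (r \<circ> Inl) (L (q \<circ> Inr) (L (beta (p \<circ> Inr)) (bvec i)))"
    by (simp add: dual_ip ip_dual[OF lphi] ip_dual[OF lL] ip_lin J2)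
  show "(dual_br Dl (dual_map dphi a) (dual_br Dl b c) + dual_br Dl (dual_map dphi b) (dual_br Dl c a)
   + dual_br Dl (dual_map dphi c) (dual_br Dl a b)) \<circ> Inl = 0 \<circ> Inl"
  proof
    fix i
    show "((dual_br Dl (dual_map dphi a) (dual_br Dl b c) + dual_br Dl (dual_map dphi b) (dual_br Dl c a)
      + dual_br Dl (dual_map dphi c) (dual_br Dl a b)) \<circ> Inl) i = (0 \<circ> Inl) i"
      by (simp only: comp_plus comp_zero comp plus_fun_apply ipL) (simp add: ip_lin algebra_simps)
  qed
qed

lemma Dl_add: "Dl (x + y) = Dl x + Dl y"
proof -
  have "dbr (x + y) = (\<lambda>w. dbr x w + dbr y w)" by (rule ext) (rule lin_add[OF lin_dbr1])
  then show ?thesis by (simp add: tad_def tmap_fadd1 tmap_fadd2 algebra_simps)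
qed

lemma Dl_smul: "Dl (\<lambda>i. c * x i) = (\<lambda>u v. c * Dl x u v)"
proof -
  have e: "dbr (\<lambda>i. c * x i) = (\<lambda>w. (\<lambda>i. c * dbr x w i))" by (rule ext) (rule lin_smul[OF lin_dbr1])
  show ?thesis by (simp only: tad_def e tmap_fsmul1 tmap_fsmul2) (simp add: fun_eq_iff algebra_simps)
qed

lemma main: "coboundary_by dbr dphi rr"
  unfolding coboundary_by_def hom_lie_bialg_def
proof (intro conjI allI)
  show "hom_lie dbr dphi" by (rule d_hom_lie)
  show "weakly_inv dbr dphi" by (rule d_wi)
  show "Dl (x + y) = Dl x + Dl y" for x y by (rule Dl_add)
  show "Dl (\<lambda>i. c * x i) = (\<lambda>u v. c * Dl x u v)" for c x by (rule Dl_smul)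
  show "hom_lie (dual_br Dl) (dual_map dphi)"
    unfolding hom_lie_def
    using bilin_dual_br lin_dual DD_skew DD_mult DD_jac by blast
  show "weakly_inv (dual_br Dl) (dual_map dphi)"
    unfolding weakly_inv_def using DD_wi by blast
  show "Dl (dbr x y) = tad dbr dphi (dphi x) (Dl y) - tad dbr dphi (dphi y) (Dl x)" for x y
    by (rule cocycle)
  show "tmap dphi id rr = tmap id dphi rr" by (rule r_phi)
qed

end

theorem corollary5p10:
  fixes br :: "('n::finite \<Rightarrow> 'k::field) \<Rightarrow> ('n \<Rightarrow> 'k) \<Rightarrow> ('n \<Rightarrow> 'k)"
    and phi :: "('n \<Rightarrow> 'k) \<Rightarrow> ('n \<Rightarrow> 'k)"
    and beta :: "('m::finite \<Rightarrow> 'k) \<Rightarrow> ('m \<Rightarrow> 'k)"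
    and rho :: "('n \<Rightarrow> 'k) \<Rightarrow> ('m \<Rightarrow> 'k) \<Rightarrow> ('m \<Rightarrow> 'k)"
    and T :: "('m \<Rightarrow> 'k) \<Rightarrow> ('n \<Rightarrow> 'k)"
  assumes "hom_lie br phi" and "weakly_inv br phi"
    and "hom_lie_rep br phi beta rho" and "weakly_inv_rep phi rho"
    and "\<forall>x v. rho (phi x) (beta (beta v)) = rho (phi x) v"
    and "O_operator br phi beta rho T"
  shows "coboundary_by (sd_br br phi rho) (sd_phi phi beta) (Tbar T - flip (Tbar T))"
proof -
  interpret cor br phi beta rho T using assms by unfold_locales
  show ?thesis by (rule main)
qed


end
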